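(* Let $\mathfrak{g}$ be a finite-dimensional semisimple Lie algebra over an algebraically closed field of characteristic $0$, with root system $R$ and base $\Pi$. Let $S\subset\Pi$ and $n=\operatorname{card}\mathcal{K}(S)$. There exist subsets $S_1,\dots,S_n$ of $\Pi$ such that: (i) $S_1\subset S_2\subset\cdots\subset S_n=S$; (ii) $\mathcal{K}(S_1)\subset\mathcal{K}(S_2)\subset\cdots\subset\mathcal{K}(S_n)$; (iii) $\operatorname{card}\mathcal{K}(S_i)=i$ for $1\leqslant i\leqslant n$.
   Context: For $S\subset\Pi$, $R^S=R\cap\mathbb{Z}S$. For $\alpha\in R$, $H_\alpha$ is the coroot ($\alpha(H_\alpha)=2$, $H_\alpha\in[\mathfrak{g}^\alpha,\mathfrak{g}^{-\alpha}]$) and $\langle\lambda,\alpha^\vee\rangle=\lambda(H_\alpha)$. For connected $S\subset\Pi$ (in the Dynkin diagram), $\varepsilon_S$ is the highest root of the irreducible root system $R^S$ w.r.t. the base $S$. The set $\mathcal{K}(S)$ of subsets of $S$ is defined by induction on $\operatorname{card}S$: $\mathcal{K}(\emptyset)=\emptyset$; if $S_1,\dots,S_r$ are the connected components of $S$, $\mathcal{K}(S)=\mathcal{K}(S_1)\cup\dots\cup\mathcal{K}(S_r)$; if $S$ is connected, $\mathcal{K}(S)=\{S\}\cup\mathcal{K}(\{\alpha\in S:\langle\alpha,\varepsilon_S^\vee\rangle=0\})$. *)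

theory Defs
  imports "HOL-Analysis.Analysis"
begin

text \<open>The root system R of a semisimple Lie algebra over an algebraically closed field
  of characteristic 0 is (up to isomorphism) exactly such a root system, realised in
  the real form of the dual of a Cartan subalgebra.\<close>

definition coroot_pair :: "'a::euclidean_space \<Rightarrow> 'a \<Rightarrow> real" where
  "coroot_pair x \<alpha> = 2 * (x \<bullet> \<alpha>) / (\<alpha> \<bullet> \<alpha>)"

definition reflection :: "'a::euclidean_space \<Rightarrow> 'a \<Rightarrow> 'a" where
  "reflection \<alpha> x = x - coroot_pair x \<alpha> *\<^sub>R \<alpha>"

definition root_system :: "'a::euclidean_space set \<Rightarrow> bool" where
  "root_system R \<longleftrightarrow> finite R \<and> 0 \<notin> R \<and> span R = UNIV
     \<and> (\<forall>\<alpha>\<in>R. \<forall>\<beta>\<in>R. reflection \<alpha> \<beta> \<in> R)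
     \<and> (\<forall>\<alpha>\<in>R. \<forall>\<beta>\<in>R. coroot_pair \<beta> \<alpha> \<in> \<int>)
     \<and> (\<forall>\<alpha>\<in>R. \<forall>c. c *\<^sub>R \<alpha> \<in> R \<longrightarrow> c = 1 \<or> c = -1)"

definition int_span :: "'a::euclidean_space set \<Rightarrow> 'a set" where
  "int_span S = {(\<Sum>\<alpha>\<in>S. of_int (c \<alpha>) *\<^sub>R \<alpha>) | c. True}"

definition nonneg_int_span :: "'a::euclidean_space set \<Rightarrow> 'a set" where
  "nonneg_int_span S = {(\<Sum>\<alpha>\<in>S. of_int (c \<alpha>) *\<^sub>R \<alpha>) | c. \<forall>\<alpha>\<in>S. c \<alpha> \<ge> 0}"

definition is_base :: "'a::euclidean_space set \<Rightarrow> 'a set \<Rightarrow> bool" where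
  "is_base R B \<longleftrightarrow> B \<subseteq> R \<and> independent B
     \<and> (\<forall>\<beta>\<in>R. \<beta> \<in> nonneg_int_span B \<or> - \<beta> \<in> nonneg_int_span B)"

definition sub_roots :: "'a::euclidean_space set \<Rightarrow> 'a set \<Rightarrow> 'a set" where
  "sub_roots R S = R \<inter> int_span S"

text \<open>Connectedness in the Dynkin diagram (two simple roots are joined iff they are
  distinct and not orthogonal).\<close>
definition dynkin_connected :: "'a::euclidean_space set \<Rightarrow> bool" where
  "dynkin_connected S \<longleftrightarrow> S \<noteq> {} \<and>
     (\<forall>A. A \<subseteq> S \<and> A \<noteq> {} \<and> A \<noteq> S \<longrightarrow> (\<exists>\<alpha>\<in>A. \<exists>\<beta>\<in>S - A. \<alpha> \<bullet> \<beta> \<noteq> 0))"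

definition dynkin_components :: "'a::euclidean_space set \<Rightarrow> 'a set set" where
  "dynkin_components S = {C. C \<subseteq> S \<and> dynkin_connected C \<and>
     (\<forall>D. C \<subseteq> D \<and> D \<subseteq> S \<and> dynkin_connected D \<longrightarrow> D = C)}"

definition highest_root :: "'a::euclidean_space set \<Rightarrow> 'a set \<Rightarrow> 'a" where
  "highest_root R S = (THE \<epsilon>. \<epsilon> \<in> sub_roots R S \<and>
     (\<forall>\<beta>\<in>sub_roots R S. \<epsilon> - \<beta> \<in> nonneg_int_span S))"

inductive inK :: "'a::euclidean_space set \<Rightarrow> 'a set \<Rightarrow> 'a set \<Rightarrow> bool" for R where
  self: "dynkin_connected S \<Longrightarrow> inK R S S"
| conn: "dynkin_connected S \<Longrightarrow>
           inK R {\<alpha>\<in>S. coroot_pair \<alpha> (highest_root R S) = 0} T \<Longrightarrow> inK R S T"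
| comp: "\<not> dynkin_connected S \<Longrightarrow> C \<in> dynkin_components S \<Longrightarrow> inK R C T \<Longrightarrow> inK R S T"

definition Kset :: "'a::euclidean_space set \<Rightarrow> 'a set \<Rightarrow> 'a set set" where
  "Kset R S = {T. inK R S T}"

end

theory Submission
  imports Defs
begin

lemma inK_sub: "inK R S T \<Longrightarrow> T \<subseteq> S \<and> dynkin_connected T"
  by (induction rule: inK.induct) (auto simp: dynkin_components_def)

lemma Kset_sub: "T \<in> Kset R S \<Longrightarrow> T \<subseteq> S \<and> T \<noteq> {}"
  unfolding Kset_def using inK_sub dynkin_connected_def by blast

lemma Kset_finite: "finite S \<Longrightarrow> finite (Kset R S)"
  by (rule finite_subset[of _ "Pow S"]) (auto dest: Kset_sub)

lemma comp_conn: "dynkin_connected S \<Longrightarrow> dynkin_components S = {S}"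
  unfolding dynkin_components_def by auto

lemma Kset_comp: "Kset R S = (\<Union>C\<in>dynkin_components S. Kset R C)"
proof (cases "dynkin_connected S")
  case True then show ?thesis by (simp add: comp_conn)
next
  case False
  show ?thesis unfolding Kset_def
  proof (intro equalityI subsetI)
    fix T assume "T \<in> {T. inK R S T}"
    then have "inK R S T" by simp
    then show "T \<in> (\<Union>C\<in>dynkin_components S. {T. inK R C T})"
      by cases (use False in auto)
  next
    fix T assume "T \<in> (\<Union>C\<in>dynkin_components S. {T. inK R C T})"
    then show "T \<in> {T. inK R S T}" using False by (auto intro: inK.comp)
  qed
qed

lemma Kset_conn: "dynkin_connected S \<Longrightarrow>
   Kset R S = insert S (Kset R {\<alpha>\<in>S. coroot_pair \<alpha> (highest_root R S) = 0})"
  unfolding Kset_def by (auto intro: inK.intros elim: inK.cases)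

lemma conn_split:
  assumes "A \<inter> X = {}" "\<forall>\<alpha>\<in>A. \<forall>\<beta>\<in>X. \<alpha> \<bullet> \<beta> = 0" "T \<subseteq> A \<union> X" "dynkin_connected T"
  shows "T \<subseteq> A \<or> T \<subseteq> X"
proof (rule ccontr)
  assume "\<not> ?thesis"
  then have "T \<inter> A \<subseteq> T" "T \<inter> A \<noteq> {}" "T \<inter> A \<noteq> T" using assms(3) by auto
  then obtain \<alpha> \<beta> where "\<alpha> \<in> T \<inter> A" "\<beta> \<in> T - T \<inter> A" "\<alpha> \<bullet> \<beta> \<noteq> 0"
    using assms(4) unfolding dynkin_connected_def by blast
  then show False using assms(2,3) by auto
qed

lemma compI:
  assumes "C \<subseteq> S" "dynkin_connected C"
    "\<And>D. C \<subseteq> D \<Longrightarrow> D \<subseteq> S \<Longrightarrow> dynkin_connected D \<Longrightarrow> D = C"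
  shows "C \<in> dynkin_components S"
proof -
  have "\<forall>D. C \<subseteq> D \<and> D \<subseteq> S \<and> dynkin_connected D \<longrightarrow> D = C"
    apply (intro allI impI) apply (elim conjE) apply (rule assms(3)) apply assumption+ done
  then show ?thesis unfolding dynkin_components_def mem_Collect_eq using assms(1,2) by (intro conjI)
qed

lemma compD:
  assumes "C \<in> dynkin_components S"
  shows "C \<subseteq> S" "dynkin_connected C"
    "\<And>D. C \<subseteq> D \<Longrightarrow> D \<subseteq> S \<Longrightarrow> dynkin_connected D \<Longrightarrow> D = C"
proof -
  have h: "C \<subseteq> S \<and> dynkin_connected C \<and> (\<forall>D. C \<subseteq> D \<and> D \<subseteq> S \<and> dynkin_connected D \<longrightarrow> D = C)"
    using assms unfolding dynkin_components_def mem_Collect_eq .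
  show "C \<subseteq> S" using h by (elim conjE)
  show "dynkin_connected C" using h by (elim conjE)
  fix D assume "C \<subseteq> D" "D \<subseteq> S" "dynkin_connected D"
  moreover have "\<forall>D. C \<subseteq> D \<and> D \<subseteq> S \<and> dynkin_connected D \<longrightarrow> D = C"
    using h by (elim conjE)
  ultimately show "D = C" by (elim allE[where x=D] impE) (intro conjI)
qed

lemma comp_union:
  assumes "A \<inter> X = {}" "\<forall>\<alpha>\<in>A. \<forall>\<beta>\<in>X. \<alpha> \<bullet> \<beta> = 0"
  shows "dynkin_components (A \<union> X) = dynkin_components A \<union> dynkin_components X"
proof -
  have sp: "T \<subseteq> A \<or> T \<subseteq> X" if "T \<subseteq> A \<union> X" "dynkin_connected T" for T
    using conn_split[OF assms that] .
  have ne: "T \<noteq> {}" if "dynkin_connected T" for T using that dynkin_connected_def by blast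
  show ?thesis
  proof (intro equalityI subsetI)
    fix C assume C: "C \<in> dynkin_components (A \<union> X)"
    note c = compD[OF C]
    from sp[OF c(1,2)] show "C \<in> dynkin_components A \<union> dynkin_components X"
    proof
      assume "C \<subseteq> A"
      then have "C \<in> dynkin_components A"
      proof (rule compI[OF _ c(2)])
        fix D assume "C \<subseteq> D" "D \<subseteq> A" "dynkin_connected D"
        moreover have "D \<subseteq> A \<union> X" using \<open>D \<subseteq> A\<close> by blast
        ultimately show "D = C" using c(3) by metis
      qed
      then show ?thesis by (rule UnI1)
    next
      assume "C \<subseteq> X"
      then have "C \<in> dynkin_components X"
      proof (rule compI[OF _ c(2)])
        fix D assume "C \<subseteq> D" "D \<subseteq> X" "dynkin_connected D"
        moreover have "D \<subseteq> A \<union> X" using \<open>D \<subseteq> X\<close> by blast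
        ultimately show "D = C" using c(3) by metis
      qed
      then show ?thesis by (rule UnI2)
    qed
  next
    fix C assume "C \<in> dynkin_components A \<union> dynkin_components X"
    then consider "C \<in> dynkin_components A" | "C \<in> dynkin_components X" by blast
    then show "C \<in> dynkin_components (A \<union> X)"
    proof cases
      case 1
      note c = compD[OF 1]
      show ?thesis
      proof (rule compI[OF _ c(2)])
        show "C \<subseteq> A \<union> X" using c(1) by blast
        fix D assume D: "C \<subseteq> D" "D \<subseteq> A \<union> X" "dynkin_connected D"
        have "D \<subseteq> A" using sp[OF D(2,3)] ne[OF c(2)] c(1) D(1) assms(1) by blast
        then show "D = C" using c(3) D by metis
      qed
    next
      case 2
      note c = compD[OF 2]
      show ?thesis
      proof (rule compI[OF _ c(2)])
        show "C \<subseteq> A \<union> X" using c(1) by blast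
        fix D assume D: "C \<subseteq> D" "D \<subseteq> A \<union> X" "dynkin_connected D"
        have "D \<subseteq> X" using sp[OF D(2,3)] ne[OF c(2)] c(1) D(1) assms(1) by blast
        then show "D = C" using c(3) D by metis
      qed
    qed
  qed
qed

lemma Kset_union:
  assumes "A \<inter> X = {}" "\<forall>\<alpha>\<in>A. \<forall>\<beta>\<in>X. \<alpha> \<bullet> \<beta> = 0"
  shows "Kset R (A \<union> X) = Kset R A \<union> Kset R X"
  using comp_union[OF assms] Kset_comp[of R "A \<union> X"] Kset_comp[of R A] Kset_comp[of R X]
  by auto

definition chainP :: "'a::euclidean_space set \<Rightarrow> 'a set \<Rightarrow> nat \<Rightarrow> (nat \<Rightarrow> 'a set) \<Rightarrow> bool" where
  "chainP R S n Ss \<longleftrightarrow> (\<forall>i\<in>{1..n}. Ss i \<subseteq> S)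
         \<and> (\<forall>i. 1 \<le> i \<and> i < n \<longrightarrow> Ss i \<subseteq> Ss (Suc i))
         \<and> (n \<ge> 1 \<longrightarrow> Ss n = S)
         \<and> (\<forall>i. 1 \<le> i \<and> i < n \<longrightarrow> Kset R (Ss i) \<subseteq> Kset R (Ss (Suc i)))
         \<and> (\<forall>i\<in>{1..n}. card (Kset R (Ss i)) = i)"

lemma main:
  fixes S :: "'a::euclidean_space set"
  shows "finite S \<Longrightarrow> (S \<noteq> {} \<longrightarrow> Kset R S \<noteq> {}) \<and> (\<exists>Ss. chainP R S (card (Kset R S)) Ss)"
proof (induction "card S" arbitrary: S rule: less_induct)
  case less
  show ?case
  proof (cases "S = {}")
    case True
    then have "Kset R S = {}" using Kset_sub by blast
    then show ?thesis using True unfolding chainP_def by simp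
  next
    case Sne: False
    show ?thesis
    proof (cases "dynkin_connected S")
      case True
      define S' where "S' = {\<alpha>\<in>S. coroot_pair \<alpha> (highest_root R S) = 0}"
      have KS: "Kset R S = insert S (Kset R S')" using Kset_conn[OF True] S'_def by simp
      have S'S: "S' \<subseteq> S" unfolding S'_def by auto
      show ?thesis
      proof (cases "S' = S")
        case True
        have "T = S" if "T \<in> Kset R S" for T
        proof -
          have "inK R S T" using that unfolding Kset_def by simp
          then have "dynkin_connected S \<longrightarrow> {\<alpha>\<in>S. coroot_pair \<alpha> (highest_root R S) = 0} = S \<longrightarrow> T = S"
            by (induction rule: inK.induct) auto
          then show ?thesis using \<open>dynkin_connected S\<close> True S'_def by simp
        qed
        then have "Kset R S = {S}" using KS by auto
        then show ?thesis unfolding chainP_def by auto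
      next
        case False
        then have lt: "card S' < card S" using S'S less.prems by (meson psubsetI psubset_card_mono)
        have fin': "finite S'" using S'S less.prems finite_subset by blast
        obtain P where P: "chainP R S' (card (Kset R S')) P" using less.hyps[OF lt fin'] by blast
        define m where "m = card (Kset R S')"
        have notin: "S \<notin> Kset R S'" using Kset_sub S'S False by blast
        have cardS: "card (Kset R S) = Suc m" using KS notin Kset_finite[OF fin'] m_def by simp
        have KS'S: "Kset R S' \<subseteq> Kset R S" using KS by auto
        define Ss where "Ss i = (if i \<le> m then P i else S)" for i
        have Pc: "\<forall>i\<in>{1..m}. P i \<subseteq> S'" "\<forall>i. 1 \<le> i \<and> i < m \<longrightarrow> P i \<subseteq> P (Suc i)"
           "m \<ge> 1 \<longrightarrow> P m = S'" "\<forall>i. 1 \<le> i \<and> i < m \<longrightarrow> Kset R (P i) \<subseteq> Kset R (P (Suc i))"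
           "\<forall>i\<in>{1..m}. card (Kset R (P i)) = i"
          using P unfolding chainP_def m_def[symmetric] apply - apply (elim conjE, assumption)+ done
        have "chainP R S (Suc m) Ss"
          unfolding chainP_def
        proof (intro conjI allI ballI impI)
          fix i assume i: "i \<in> {1..Suc m}"
          show "Ss i \<subseteq> S"
          proof (cases "i \<le> m")
            case True
            then have "P i \<subseteq> S'" using Pc(1) i by simp
            then show ?thesis using True S'S unfolding Ss_def by simp
          qed (simp add: Ss_def)
        next
          fix i assume i: "1 \<le> i \<and> i < Suc m"
          show "Ss i \<subseteq> Ss (Suc i)"
          proof (cases "i < m")
            case True then show ?thesis using Pc(2) i unfolding Ss_def by auto
          next
            case False then have "i = m" using i by simp
            then show ?thesis using Pc(3) S'S i unfolding Ss_def by auto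
          qed
        next
          show "Ss (Suc m) = S" unfolding Ss_def by simp
        next
          fix i assume i: "1 \<le> i \<and> i < Suc m"
          show "Kset R (Ss i) \<subseteq> Kset R (Ss (Suc i))"
          proof (cases "i < m")
            case True then show ?thesis using Pc(4) i unfolding Ss_def by auto
          next
            case False then have "i = m" using i by simp
            then show ?thesis using Pc(3) KS'S i unfolding Ss_def by auto
          qed
        next
          fix i assume i: "i \<in> {1..Suc m}"
          show "card (Kset R (Ss i)) = i"
          proof (cases "i \<le> m")
            case True then show ?thesis using Pc(5) i unfolding Ss_def by auto
          next
            case False then have "i = Suc m" using i by simp
            then show ?thesis using cardS unfolding Ss_def by simp
          qed
        qed
        then show ?thesis using cardS by auto
      qed
    next
      case False
      then obtain A where A: "A \<subseteq> S" "A \<noteq> {}" "A \<noteq> S"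
          and orth: "\<forall>\<alpha>\<in>A. \<forall>\<beta>\<in>S - A. \<alpha> \<bullet> \<beta> = 0"
        using Sne unfolding dynkin_connected_def by blast
      define X where "X = S - A"
      have ltA: "card A < card S" using A less.prems by (meson psubsetI psubset_card_mono)
      have "X \<subset> S" using A X_def by blast
      then have ltX: "card X < card S" using less.prems by (simp add: psubset_card_mono)
      have finA: "finite A" using A less.prems finite_subset by blast
      have finX: "finite X" using X_def less.prems by simp
      have Xne: "X \<noteq> {}" using A X_def by blast
      from less.hyps[OF ltA finA] A obtain P where KAne: "Kset R A \<noteq> {}"
        and P: "chainP R A (card (Kset R A)) P" by blast
      from less.hyps[OF ltX finX] Xne obtain Q where KXne: "Kset R X \<noteq> {}"
        and Q: "chainP R X (card (Kset R X)) Q" by blast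
      define a where "a = card (Kset R A)"
      define b where "b = card (Kset R X)"
      have a1: "a \<ge> 1" "b \<ge> 1" using KAne KXne Kset_finite[OF finA] Kset_finite[OF finX] a_def b_def
        by (auto simp: Suc_le_eq card_gt_0_iff)
      have SAX: "S = A \<union> X" using A X_def by auto
      have orthY: "\<forall>\<alpha>\<in>A. \<forall>\<beta>\<in>Y. \<alpha> \<bullet> \<beta> = 0" if "Y \<subseteq> X" for Y
        using orth that X_def by blast
      have disjY: "A \<inter> Y = {}" if "Y \<subseteq> X" for Y using that X_def by blast
      have KU: "Kset R (A \<union> Y) = Kset R A \<union> Kset R Y" if "Y \<subseteq> X" for Y
        using Kset_union[OF disjY[OF that] orthY[OF that]] .
      have dj: "Kset R A \<inter> Kset R Y = {}" if "Y \<subseteq> X" for Y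
        using Kset_sub disjY[OF that] that by blast
      have cardU: "card (Kset R (A \<union> Y)) = a + card (Kset R Y)" if "Y \<subseteq> X" for Y
      proof -
        have "finite Y" using that finX finite_subset by blast
        then show ?thesis using KU[OF that] dj[OF that] card_Un_disjoint Kset_finite[OF finA] Kset_finite a_def
          by metis
      qed
      have cardS: "card (Kset R S) = a + b" using cardU[of X] SAX b_def by simp
      define Ss where "Ss i = (if i \<le> a then P i else A \<union> Q (i - a))" for i
      have Pc: "\<forall>i\<in>{1..a}. P i \<subseteq> A" "\<forall>i. 1 \<le> i \<and> i < a \<longrightarrow> P i \<subseteq> P (Suc i)"
           "a \<ge> 1 \<longrightarrow> P a = A" "\<forall>i. 1 \<le> i \<and> i < a \<longrightarrow> Kset R (P i) \<subseteq> Kset R (P (Suc i))"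
           "\<forall>i\<in>{1..a}. card (Kset R (P i)) = i"
        using P unfolding chainP_def a_def[symmetric] apply - apply (elim conjE, assumption)+ done
      have Qc: "\<forall>i\<in>{1..b}. Q i \<subseteq> X" "\<forall>i. 1 \<le> i \<and> i < b \<longrightarrow> Q i \<subseteq> Q (Suc i)"
           "b \<ge> 1 \<longrightarrow> Q b = X" "\<forall>i. 1 \<le> i \<and> i < b \<longrightarrow> Kset R (Q i) \<subseteq> Kset R (Q (Suc i))"
           "\<forall>i\<in>{1..b}. card (Kset R (Q i)) = i"
        using Q unfolding chainP_def b_def[symmetric] apply - apply (elim conjE, assumption)+ done
      have "chainP R S (a + b) Ss"
        unfolding chainP_def
      proof (intro conjI allI ballI impI)
        fix i assume i: "i \<in> {1..a+b}"
        show "Ss i \<subseteq> S"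
        proof (cases "i \<le> a")
          case True
          then have "P i \<subseteq> A" using Pc(1) i by simp
          then show ?thesis using True SAX unfolding Ss_def by auto
        next
          case False
          then have "i - a \<in> {1..b}" using i by auto
          then have "Q (i - a) \<subseteq> X" using Qc(1) by blast
          then show ?thesis using False SAX unfolding Ss_def by auto
        qed
      next
        fix i assume i: "1 \<le> i \<and> i < a + b"
        show "Ss i \<subseteq> Ss (Suc i)"
        proof (cases "i < a")
          case True then show ?thesis using Pc(2) i unfolding Ss_def by auto
        next
          case False
          then have "Suc i - a = Suc (i - a)" by simp
          moreover have "i = a \<or> 1 \<le> i - a" using False by auto
          ultimately show ?thesis using Pc(3) a1 Qc(2) i False unfolding Ss_def by auto
        qed
      next
        show "Ss (a + b) = S" using a1 Qc(3) SAX unfolding Ss_def by auto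
      next
        fix i assume i: "1 \<le> i \<and> i < a + b"
        show "Kset R (Ss i) \<subseteq> Kset R (Ss (Suc i))"
        proof (cases "i < a")
          case True then show ?thesis using Pc(4) i unfolding Ss_def by auto
        next
          case False
          then have e: "Suc i - a = Suc (i - a)" by simp
          have "Suc (i - a) \<in> {1..b}" using i False by auto
          then have q: "Q (Suc (i - a)) \<subseteq> X" using Qc(1) by blast
          show ?thesis
          proof (cases "i = a")
            case True
            then show ?thesis using Pc(3) a1 KU[OF q] e unfolding Ss_def by auto
          next
            case False': False
            then have "i - a \<in> {1..b}" using i False by auto
            then have q2: "Q (i - a) \<subseteq> X" using Qc(1) by blast
            have "1 \<le> i - a \<and> i - a < b" using i False False' by auto
            then have "Kset R (Q (i - a)) \<subseteq> Kset R (Q (Suc (i - a)))" using Qc(4) by blast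
            then show ?thesis using KU[OF q] KU[OF q2] e False False' unfolding Ss_def by auto
          qed
        qed
      next
        fix i assume i: "i \<in> {1..a+b}"
        show "card (Kset R (Ss i)) = i"
        proof (cases "i \<le> a")
          case True then show ?thesis using Pc(5) i unfolding Ss_def by auto
        next
          case False
          then have "i - a \<in> {1..b}" using i by auto
          then have q: "Q (i - a) \<subseteq> X" "card (Kset R (Q (i - a))) = i - a" using Qc(1,5) by blast+
          then show ?thesis using cardU[OF q(1)] False unfolding Ss_def by auto
        qed
      qed
      moreover have "Kset R S \<noteq> {}" using KU[of X] SAX KAne by auto
      ultimately show ?thesis using cardS by auto
    qed
  qed
qed

theorem lemma5p1:
  fixes R B S :: "'a::euclidean_space set"
  assumes "root_system R" and "is_base R B" and "S \<subseteq> B"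
  shows "\<exists>Ss :: nat \<Rightarrow> 'a set.
           (\<forall>i\<in>{1..card (Kset R S)}. Ss i \<subseteq> B)
         \<and> (\<forall>i. 1 \<le> i \<and> i < card (Kset R S) \<longrightarrow> Ss i \<subseteq> Ss (Suc i))
         \<and> (card (Kset R S) \<ge> 1 \<longrightarrow> Ss (card (Kset R S)) = S)
         \<and> (\<forall>i. 1 \<le> i \<and> i < card (Kset R S) \<longrightarrow> Kset R (Ss i) \<subseteq> Kset R (Ss (Suc i)))
         \<and> (\<forall>i\<in>{1..card (Kset R S)}. card (Kset R (Ss i)) = i)"
proof -
  have "finite B" using assms(1,2) unfolding root_system_def is_base_def
    by (meson finite_subset)
  then have "finite S" using assms(3) finite_subset by blast
  then obtain Ss where c: "chainP R S (card (Kset R S)) Ss" using main by blast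
  show ?thesis
  proof (intro exI[of _ Ss] conjI)
    have h: "\<forall>i\<in>{1..card (Kset R S)}. Ss i \<subseteq> S" using c unfolding chainP_def by (elim conjE)
    show "\<forall>i\<in>{1..card (Kset R S)}. Ss i \<subseteq> B"
    proof
      fix i assume "i \<in> {1..card (Kset R S)}"
      then have "Ss i \<subseteq> S" using h by (rule bspec[rotated])
      then show "Ss i \<subseteq> B" using assms(3) by (rule subset_trans)
    qed
  next
    show "\<forall>i. 1 \<le> i \<and> i < card (Kset R S) \<longrightarrow> Ss i \<subseteq> Ss (Suc i)"
      "1 \<le> card (Kset R S) \<longrightarrow> Ss (card (Kset R S)) = S"
      "\<forall>i. 1 \<le> i \<and> i < card (Kset R S) \<longrightarrow> Kset R (Ss i) \<subseteq> Kset R (Ss (Suc i))"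
      "\<forall>i\<in>{1..card (Kset R S)}. card (Kset R (Ss i)) = i"
      using c unfolding chainP_def apply - apply (elim conjE, assumption)+ done
  qed
qed

end
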